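(* Let $E$ be a symmetric operator defined on a dense domain $\mathcal D$ of a Hilbert space $\mathcal H$ (real or complex). Let $d_1,d_2,\tilde d_1,\tilde d_2$ be real numbers with \[ \tilde d_1\le d_1,d_2\le\tilde d_2,\qquad\tilde d_1\ne\tilde d_2,\qquad\tilde d_1+\tilde d_2=d_1+d_2. \] If there is an orthonormal set $\{f_1,f_2\}\subset\mathcal D$ with $\langle Ef_i,f_i\rangle=\tilde d_i$ for $i=1,2$, then there exist $\alpha$ with \[ \frac{\tilde d_2-d_1}{\tilde d_2-\tilde d_1}\le\alpha\le1 \] and $\theta\in[0,2\pi)$ such that, setting \[ e_1=\sqrt\alpha\,f_1+\sqrt{1-\alpha}\,e^{i\theta}f_2,\qquad e_2=\sqrt{1-\alpha}\,f_1-\sqrt\alpha\,e^{i\theta}f_2, \] we have $\langle Ee_i,e_i\rangle=d_i$ for $i=1,2$. Moreover, if $\mathcal H$ is a real Hilbert space then $e^{i\theta}=\pm1$, and if the inequalities $\tilde d_1\le d_1,d_2\le\tilde d_2$ are all strict, then $\alpha<1$.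
   Context: $E$ symmetric means $\langle Ef,g\rangle=\langle f,Eg\rangle$ for all $f,g\in\mathcal D$. *)

theory Defs
  imports "HOL-Analysis.Analysis"
begin

text \<open>Complex Hilbert spaces are not available in the distribution libraries, so we
describe one explicitly: a carrier type 'a (an additive abelian group) together with a
complex scalar multiplication sc and a complex inner product ip (linear in the first
argument, conjugate-symmetric, positive definite), complete w.r.t. the induced norm.\<close>

definition cip_norm :: "('a \<Rightarrow> 'a \<Rightarrow> complex) \<Rightarrow> 'a \<Rightarrow> real" where
  "cip_norm ip x = sqrt (Re (ip x x))"

definition complex_hilbert_space ::
  "(complex \<Rightarrow> 'a::ab_group_add \<Rightarrow> 'a) \<Rightarrow> ('a \<Rightarrow> 'a \<Rightarrow> complex) \<Rightarrow> bool" where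
  "complex_hilbert_space sc ip \<longleftrightarrow>
     (\<forall>a x y. sc a (x + y) = sc a x + sc a y) \<and>
     (\<forall>a b x. sc (a + b) x = sc a x + sc b x) \<and>
     (\<forall>a b x. sc a (sc b x) = sc (a * b) x) \<and>
     (\<forall>x. sc 1 x = x) \<and>
     (\<forall>x y z. ip (x + y) z = ip x z + ip y z) \<and>
     (\<forall>a x y. ip (sc a x) y = a * ip x y) \<and>
     (\<forall>x y. ip y x = cnj (ip x y)) \<and>
     (\<forall>x. Im (ip x x) = 0 \<and> Re (ip x x) \<ge> 0) \<and>
     (\<forall>x. ip x x = 0 \<longrightarrow> x = 0) \<and>
     (\<forall>X :: nat \<Rightarrow> 'a.
        (\<forall>e>0. \<exists>N. \<forall>m\<ge>N. \<forall>n\<ge>N. cip_norm ip (X m - X n) < e) \<longrightarrow>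
        (\<exists>L. \<forall>e>0. \<exists>N. \<forall>n\<ge>N. cip_norm ip (X n - L) < e))"

definition complex_operator_on ::
  "(complex \<Rightarrow> 'a::ab_group_add \<Rightarrow> 'a) \<Rightarrow> 'a set \<Rightarrow> ('a \<Rightarrow> 'a) \<Rightarrow> bool" where
  "complex_operator_on sc D E \<longleftrightarrow>
     0 \<in> D \<and> (\<forall>x\<in>D. \<forall>y\<in>D. x + y \<in> D) \<and> (\<forall>a. \<forall>x\<in>D. sc a x \<in> D) \<and>
     (\<forall>x\<in>D. \<forall>y\<in>D. E (x + y) = E x + E y) \<and> (\<forall>a. \<forall>x\<in>D. E (sc a x) = sc a (E x))"

definition complex_dense :: "('a::ab_group_add \<Rightarrow> 'a \<Rightarrow> complex) \<Rightarrow> 'a set \<Rightarrow> bool" where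
  "complex_dense ip D \<longleftrightarrow> (\<forall>x. \<forall>e>0. \<exists>d\<in>D. cip_norm ip (x - d) < e)"

definition real_operator_on :: "'a::real_vector set \<Rightarrow> ('a \<Rightarrow> 'a) \<Rightarrow> bool" where
  "real_operator_on D E \<longleftrightarrow>
     0 \<in> D \<and> (\<forall>x\<in>D. \<forall>y\<in>D. x + y \<in> D) \<and> (\<forall>a. \<forall>x\<in>D. a *\<^sub>R x \<in> D) \<and>
     (\<forall>x\<in>D. \<forall>y\<in>D. E (x + y) = E x + E y) \<and> (\<forall>a. \<forall>x\<in>D. E (a *\<^sub>R x) = a *\<^sub>R E x)"

end

theory Submission
  imports Defs
begin


context fixes sc :: "complex \<Rightarrow> 'a::ab_group_add \<Rightarrow> 'a" and ip
  assumes H: "complex_hilbert_space sc ip"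
begin
lemma sc_zero: "sc 0 x = 0"
proof -
  have "sc (0+0) x = sc 0 x + sc 0 x" by (rule H[unfolded complex_hilbert_space_def, THEN conjunct2, THEN conjunct1, rule_format])
  thus ?thesis by simp
qed
lemma sc_neg: "sc (-a) x = - sc a x"
proof -
  have "sc (a + -a) x = sc a x + sc (-a) x" by (rule H[unfolded complex_hilbert_space_def, THEN conjunct2, THEN conjunct1, rule_format])
  thus ?thesis using sc_zero by (simp add: eq_neg_iff_add_eq_0 add.commute)
qed
lemma ip_add_l: "ip (x + y) z = ip x z + ip y z" by (rule H[unfolded complex_hilbert_space_def, THEN conjunct2, THEN conjunct2, THEN conjunct2, THEN conjunct2, THEN conjunct1, rule_format])
lemma ip_sc_l: "ip (sc a x) y = a * ip x y" by (rule H[unfolded complex_hilbert_space_def, THEN conjunct2, THEN conjunct2, THEN conjunct2, THEN conjunct2, THEN conjunct2, THEN conjunct1, rule_format])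
lemma ip_cnj: "ip y x = cnj (ip x y)" by (rule H[unfolded complex_hilbert_space_def, THEN conjunct2, THEN conjunct2, THEN conjunct2, THEN conjunct2, THEN conjunct2, THEN conjunct2, THEN conjunct1, rule_format])
lemma ip_add_r: "ip z (x + y) = ip z x + ip z y"
  by (metis ip_cnj ip_add_l complex_cnj_add)
lemma ip_sc_r: "ip x (sc a y) = cnj a * ip x y"
  by (metis ip_cnj ip_sc_l complex_cnj_mult)
lemma sc_add_r: "sc a (x + y) = sc a x + sc a y" by (rule H[unfolded complex_hilbert_space_def, THEN conjunct1, rule_format])

lemma quad:
  assumes O: "complex_operator_on sc D E" and f: "f1 \<in> D" "f2 \<in> D"
  shows "ip (E (sc x f1 + sc y f2)) (sc x f1 + sc y f2) =
     x*cnj x*ip (E f1) f1 + x*cnj y*ip (E f1) f2 + y*cnj x*ip (E f2) f1 + y*cnj y*ip (E f2) f2"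
proof -
  have "E (sc x f1 + sc y f2) = sc x (E f1) + sc y (E f2)"
    using O f unfolding complex_operator_on_def by metis
  thus ?thesis by (simp add: ip_add_l ip_add_r ip_sc_l ip_sc_r algebra_simps)
qed
end

lemma complex_part:
  fixes d1 d2 dt1 dt2 :: real
  assumes "dt1 \<le> d1" and "d1 \<le> dt2" and "dt1 \<le> d2" and "d2 \<le> dt2"
    and "dt1 \<noteq> dt2" and "dt1 + dt2 = d1 + d2"
  and Hall: "complex_hilbert_space sc ip \<and> complex_operator_on sc D E \<and> complex_dense ip D \<and>
       (\<forall>f\<in>D. \<forall>g\<in>D. ip (E f) g = ip f (E g)) \<and>
       f1 \<in> D \<and> f2 \<in> D \<and> ip f1 f1 = 1 \<and> ip f2 f2 = 1 \<and> ip f1 f2 = 0 \<and>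
       ip (E f1) f1 = complex_of_real dt1 \<and> ip (E f2) f2 = complex_of_real dt2"
  shows "(\<exists>\<alpha> \<theta>. (dt2 - d1) / (dt2 - dt1) \<le> \<alpha> \<and> \<alpha> \<le> 1 \<and> 0 \<le> \<theta> \<and> \<theta> < 2 * pi \<and>
          (let e1 = sc (complex_of_real (sqrt \<alpha>)) f1
                    + sc (complex_of_real (sqrt (1 - \<alpha>)) * exp (\<i> * complex_of_real \<theta>)) f2;
               e2 = sc (complex_of_real (sqrt (1 - \<alpha>))) f1
                    - sc (complex_of_real (sqrt \<alpha>) * exp (\<i> * complex_of_real \<theta>)) f2
           in ip (E e1) e1 = complex_of_real d1 \<and> ip (E e2) e2 = complex_of_real d2) \<and>
          (dt1 < d1 \<and> d1 < dt2 \<and> dt1 < d2 \<and> d2 < dt2 \<longrightarrow> \<alpha> < 1))"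
proof -
  from Hall have H: "complex_hilbert_space sc ip" and O: "complex_operator_on sc D E"
    and sym: "\<forall>f\<in>D. \<forall>g\<in>D. ip (E f) g = ip f (E g)" and f: "f1 \<in> D" "f2 \<in> D"
    and d1: "ip (E f1) f1 = complex_of_real dt1" and d2: "ip (E f2) f2 = complex_of_real dt2" by blast+
  define b where "b = ip (E f2) f1"
  have b': "ip (E f1) f2 = cnj b"
    using sym f ip_cnj[OF H] unfolding b_def by metis
  define \<theta> where "\<theta> = Arg2pi (\<i> * cnj b)"
  define w where "w = exp (\<i> * complex_of_real \<theta>)"
  have th: "0 \<le> \<theta>" "\<theta> < 2*pi" and isarg: "\<i> * cnj b = of_real (cmod b) * w"
    using Arg2pi[of "\<i> * cnj b"] unfolding \<theta>_def w_def is_Arg_def by (auto simp: norm_mult)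
  have w1: "w * cnj w = 1" unfolding w_def
    by (metis complex_norm_square mult.commute norm_exp_i_times of_real_1 power_one)
  have Rz: "cnj (w*b) + w*b = 0"
  proof (cases "b = 0")
    case False
    have "of_real (cmod b) * (w * b) = \<i> * cnj b * b" using isarg by (simp add: algebra_simps)
    also have "\<dots> = \<i> * (b * cnj b)" by (simp add: ac_simps)
    also have "\<dots> = \<i> * of_real ((cmod b)^2)" by (simp only: complex_norm_square)
    finally have "w * b = \<i> * of_real (cmod b)" using False
      by (simp add: power2_eq_square)
    thus ?thesis by (simp add: complex_eq_iff)
  qed simp
  have lt: "dt1 < dt2" using assms(1,2,5) by linarith
  define \<alpha> where "\<alpha> = (dt2 - d1) / (dt2 - dt1)"
  have a0: "0 \<le> \<alpha>" "\<alpha> \<le> 1" using lt assms(1,2) by (auto simp: \<alpha>_def field_simps)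
  have lin: "\<alpha> * dt1 + (1-\<alpha>) * dt2 = d1"
  proof -
    have "\<alpha> * (dt2 - dt1) = dt2 - d1" using lt by (simp add: \<alpha>_def)
    thus ?thesis by (simp add: algebra_simps)
  qed
  define a where "a = sqrt \<alpha>" define c where "c = sqrt (1-\<alpha>)"
  have aa: "a*a = \<alpha>" "c*c = 1-\<alpha>" using a0 by (auto simp: a_def c_def)
  have e1: "ip (E (sc (of_real a) f1 + sc (of_real c * w) f2)) (sc (of_real a) f1 + sc (of_real c * w) f2)
     = of_real (a*a*dt1 + c*c*dt2) + of_real (a*c) * (cnj (w*b) + w*b)"
    unfolding quad[OF H O f] d1 d2 b_def[symmetric] b'
    using w1 by (simp add: algebra_simps)
  have minus: "sc (of_real c) f1 - sc (of_real a * w) f2 = sc (of_real c) f1 + sc (-(of_real a * w)) f2"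
    by (simp add: sc_neg[OF H])
  have e2: "ip (E (sc (of_real c) f1 + sc (-(of_real a * w)) f2)) (sc (of_real c) f1 + sc (-(of_real a * w)) f2)
     = of_real (c*c*dt1 + a*a*dt2) - of_real (a*c) * (cnj (w*b) + w*b)"
    unfolding quad[OF H O f] d1 d2 b_def[symmetric] b'
    using w1 by (simp add: algebra_simps)
  have l2: "(1-\<alpha>)*dt1 + \<alpha>*dt2 = d2"
  proof -
    have "(1-\<alpha>)*dt1 + \<alpha>*dt2 = dt1+dt2 - (\<alpha>*dt1 + (1-\<alpha>)*dt2)" by (simp add: algebra_simps)
    thus ?thesis using lin assms(6) by linarith
  qed
  have L: "(let e1 = sc (complex_of_real a) f1 + sc (complex_of_real c * w) f2;
               e2 = sc (complex_of_real c) f1 - sc (complex_of_real a * w) f2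
           in ip (E e1) e1 = complex_of_real d1 \<and> ip (E e2) e2 = complex_of_real d2)"
    unfolding Let_def minus e1 e2 Rz aa lin l2 by simp
  have L2: "(let e1 = sc (complex_of_real (sqrt \<alpha>)) f1
                    + sc (complex_of_real (sqrt (1 - \<alpha>)) * exp (\<i> * complex_of_real \<theta>)) f2;
               e2 = sc (complex_of_real (sqrt (1 - \<alpha>))) f1
                    - sc (complex_of_real (sqrt \<alpha>) * exp (\<i> * complex_of_real \<theta>)) f2
           in ip (E e1) e1 = complex_of_real d1 \<and> ip (E e2) e2 = complex_of_real d2)"
    using L unfolding a_def c_def w_def .
  have lt1: "dt1 < d1 \<longrightarrow> \<alpha> < 1" using lt by (auto simp: \<alpha>_def field_simps)
  have "(dt2 - d1) / (dt2 - dt1) \<le> \<alpha>" by (simp add: \<alpha>_def)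
  then show ?thesis using a0(2) th L2 lt1 by blast
qed


lemma real_part:
  fixes d1 d2 dt1 dt2 :: real and D :: "'b::{real_inner, complete_space} set"
  assumes "dt1 \<le> d1" and "d1 \<le> dt2" and "dt1 \<le> d2" and "d2 \<le> dt2"
    and "dt1 \<noteq> dt2" and "dt1 + dt2 = d1 + d2"
  and Hall: "real_operator_on D E \<and> closure D = UNIV \<and>
       (\<forall>f\<in>D. \<forall>g\<in>D. inner (E f) g = inner f (E g)) \<and>
       f1 \<in> D \<and> f2 \<in> D \<and> inner f1 f1 = 1 \<and> inner f2 f2 = 1 \<and> inner f1 f2 = 0 \<and>
       inner (E f1) f1 = dt1 \<and> inner (E f2) f2 = dt2"
  shows "(\<exists>\<alpha> (s::real). (dt2 - d1) / (dt2 - dt1) \<le> \<alpha> \<and> \<alpha> \<le> 1 \<and> s \<in> {1, -1} \<and>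
          (let e1 = sqrt \<alpha> *\<^sub>R f1 + (sqrt (1 - \<alpha>) * s) *\<^sub>R f2;
               e2 = sqrt (1 - \<alpha>) *\<^sub>R f1 - (sqrt \<alpha> * s) *\<^sub>R f2
           in inner (E e1) e1 = d1 \<and> inner (E e2) e2 = d2) \<and>
          (dt1 < d1 \<and> d1 < dt2 \<and> dt1 < d2 \<and> d2 < dt2 \<longrightarrow> \<alpha> < 1))"
proof -
  from Hall have O: "real_operator_on D E"
    and sym: "\<forall>f\<in>D. \<forall>g\<in>D. inner (E f) g = inner f (E g)" and f: "f1 \<in> D" "f2 \<in> D"
    and d1: "inner (E f1) f1 = dt1" and d2: "inner (E f2) f2 = dt2" by auto
  define b where "b = inner (E f2) f1"
  have b': "inner (E f1) f2 = b"
    using sym f unfolding b_def by (metis inner_commute)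
  have quadR: "inner (E (x *\<^sub>R f1 + y *\<^sub>R f2)) (x *\<^sub>R f1 + y *\<^sub>R f2) = x*x*dt1 + 2*x*y*b + y*y*dt2"
    for x y
  proof -
    have "E (x *\<^sub>R f1 + y *\<^sub>R f2) = x *\<^sub>R E f1 + y *\<^sub>R E f2"
      using O f unfolding real_operator_on_def by metis
    thus ?thesis by (simp add: inner_add_left inner_add_right d1 d2 b' b_def[symmetric] algebra_simps)
  qed
  define s :: real where "s = (if b \<ge> 0 then 1 else -1)"
  have sb: "s * b = \<bar>b\<bar>" "s * s = 1" "s \<in> {1,-1}" by (auto simp: s_def)
  define g where "g = (\<lambda>\<alpha>. \<alpha>*dt1 + (1-\<alpha>)*dt2 + 2* sqrt \<alpha>* sqrt(1-\<alpha>)*\<bar>b\<bar>)"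
  have lt: "dt1 < dt2" using assms(1,2,5) by linarith
  define \<alpha>0 where "\<alpha>0 = (dt2 - d1) / (dt2 - dt1)"
  have a0: "0 \<le> \<alpha>0" "\<alpha>0 \<le> 1" using lt assms(1,2) by (auto simp: \<alpha>0_def field_simps)
  have lin: "\<alpha>0 * dt1 + (1-\<alpha>0) * dt2 = d1"
  proof -
    have "\<alpha>0 * (dt2 - dt1) = dt2 - d1" using lt by (simp add: \<alpha>0_def)
    thus ?thesis by (simp add: algebra_simps)
  qed
  have "g 1 \<le> d1" using assms(1) by (simp add: g_def)
  moreover have "d1 \<le> g \<alpha>0" using lin a0 by (simp add: g_def)
  moreover have "\<forall>x. \<alpha>0 \<le> x \<and> x \<le> 1 \<longrightarrow> isCont g x" unfolding g_def
    by (intro allI impI continuous_intros)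
  ultimately obtain \<alpha> where al: "\<alpha>0 \<le> \<alpha>" "\<alpha> \<le> 1" "g \<alpha> = d1"
    using IVT2[of g 1 d1 \<alpha>0] a0 by auto
  have ap: "0 \<le> \<alpha>" using al a0 by linarith
  define a where "a = sqrt \<alpha>" define c where "c = sqrt (1-\<alpha>)"
  have aa: "a*a = \<alpha>" "c*c = 1-\<alpha>" using ap al by (auto simp: a_def c_def)
  have ga: "\<alpha>*dt1 + (1-\<alpha>)*dt2 + 2*a*c*\<bar>b\<bar> = d1" using al(3) by (simp add: g_def a_def c_def)
  have e1: "inner (E (a *\<^sub>R f1 + (c * s) *\<^sub>R f2)) (a *\<^sub>R f1 + (c * s) *\<^sub>R f2) = d1"
  proof -
    have "inner (E (a *\<^sub>R f1 + (c * s) *\<^sub>R f2)) (a *\<^sub>R f1 + (c * s) *\<^sub>R f2)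
       = (a*a)*dt1 + 2*a*c*(s * b) + (c*c)*(s * s)*dt2" unfolding quadR by (simp add: algebra_simps)
    also have "\<dots> = d1" unfolding aa sb using ga by simp
    finally show ?thesis .
  qed
  have minus: "c *\<^sub>R f1 - (a * s) *\<^sub>R f2 = c *\<^sub>R f1 + (-(a * s)) *\<^sub>R f2" by simp
  have e2: "inner (E (c *\<^sub>R f1 - (a * s) *\<^sub>R f2)) (c *\<^sub>R f1 - (a * s) *\<^sub>R f2) = d2"
  proof -
    have "inner (E (c *\<^sub>R f1 - (a * s) *\<^sub>R f2)) (c *\<^sub>R f1 - (a * s) *\<^sub>R f2)
       = (c*c)*dt1 - 2*a*c*(s * b) + (a*a)*(s * s)*dt2" unfolding minus quadR by (simp add: algebra_simps)
    also have "\<dots> = d2" unfolding aa sb using ga assms(6) by (simp add: algebra_simps)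
    finally show ?thesis .
  qed
  have "dt1 < d1 \<longrightarrow> \<alpha> < 1"
  proof
    assume "dt1 < d1"
    moreover have "\<alpha> \<noteq> 1" proof assume "\<alpha> = 1" thus False using al(3) \<open>dt1 < d1\<close> by (simp add: g_def) qed
    ultimately show "\<alpha> < 1" using al(2) by simp
  qed
  thus ?thesis using al sb e1 e2 unfolding a_def c_def \<alpha>0_def Let_def
    by (intro exI[of _ \<alpha>] exI[of _ s]) auto
qed
theorem lemma2p7:
  fixes d1 d2 dt1 dt2 :: real
  assumes "dt1 \<le> d1" and "d1 \<le> dt2" and "dt1 \<le> d2" and "d2 \<le> dt2"
    and "dt1 \<noteq> dt2" and "dt1 + dt2 = d1 + d2"
  shows
   "(\<forall>(sc :: complex \<Rightarrow> 'a::ab_group_add \<Rightarrow> 'a) ip D E f1 f2.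
       complex_hilbert_space sc ip \<and> complex_operator_on sc D E \<and> complex_dense ip D \<and>
       (\<forall>f\<in>D. \<forall>g\<in>D. ip (E f) g = ip f (E g)) \<and>
       f1 \<in> D \<and> f2 \<in> D \<and> ip f1 f1 = 1 \<and> ip f2 f2 = 1 \<and> ip f1 f2 = 0 \<and>
       ip (E f1) f1 = complex_of_real dt1 \<and> ip (E f2) f2 = complex_of_real dt2 \<longrightarrow>
       (\<exists>\<alpha> \<theta>. (dt2 - d1) / (dt2 - dt1) \<le> \<alpha> \<and> \<alpha> \<le> 1 \<and> 0 \<le> \<theta> \<and> \<theta> < 2 * pi \<and>
          (let e1 = sc (complex_of_real (sqrt \<alpha>)) f1
                    + sc (complex_of_real (sqrt (1 - \<alpha>)) * exp (\<i> * complex_of_real \<theta>)) f2;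
               e2 = sc (complex_of_real (sqrt (1 - \<alpha>))) f1
                    - sc (complex_of_real (sqrt \<alpha>) * exp (\<i> * complex_of_real \<theta>)) f2
           in ip (E e1) e1 = complex_of_real d1 \<and> ip (E e2) e2 = complex_of_real d2) \<and>
          (dt1 < d1 \<and> d1 < dt2 \<and> dt1 < d2 \<and> d2 < dt2 \<longrightarrow> \<alpha> < 1)))
    \<and>
    (\<forall>(D :: 'b::{real_inner, complete_space} set) E f1 f2.
       real_operator_on D E \<and> closure D = UNIV \<and>
       (\<forall>f\<in>D. \<forall>g\<in>D. inner (E f) g = inner f (E g)) \<and>
       f1 \<in> D \<and> f2 \<in> D \<and> inner f1 f1 = 1 \<and> inner f2 f2 = 1 \<and> inner f1 f2 = 0 \<and>
       inner (E f1) f1 = dt1 \<and> inner (E f2) f2 = dt2 \<longrightarrow>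
       (\<exists>\<alpha> (s::real). (dt2 - d1) / (dt2 - dt1) \<le> \<alpha> \<and> \<alpha> \<le> 1 \<and> s \<in> {1, -1} \<and>
          (let e1 = sqrt \<alpha> *\<^sub>R f1 + (sqrt (1 - \<alpha>) * s) *\<^sub>R f2;
               e2 = sqrt (1 - \<alpha>) *\<^sub>R f1 - (sqrt \<alpha> * s) *\<^sub>R f2
           in inner (E e1) e1 = d1 \<and> inner (E e2) e2 = d2) \<and>
          (dt1 < d1 \<and> d1 < dt2 \<and> dt1 < d2 \<and> d2 < dt2 \<longrightarrow> \<alpha> < 1)))"
    apply (rule conjI)
   apply (intro allI impI)
   apply (erule complex_part[OF assms])
  apply (intro allI impI)
  apply (erule real_part[OF assms])
  done

end
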